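(* Two rigid real-analytic hypersurfaces in $\mathbb{C}^2$ $$u=z\bar z+\sum_{j,k\geq2}F_{j,k}z^j\bar z^k\qquad\text{and}\qquad u'=z'\bar z'+\sum_{j,k\geq2}F'_{j,k}z'^j\bar z'^k$$ are rigidly biholomorphically equivalent (as germs at the origin) if and only if there exist $\rho\in\mathbb{R}_{>0}$ and $\varphi\in\mathbb{R}$ such that $$F_{j,k}=\rho^{\frac{j+k-2}{2}}e^{i\varphi(j-k)}F'_{j,k}\qquad(j\geq2,\ k\geq2).$$
   Context: Coordinates on $\mathbb{C}^2$ are $(z,w)$, $w=u+iv$. A rigid biholomorphism is a local biholomorphism $(z,w)\mapsto(f(z),\rho w+g(z))$ with $f,g$ holomorphic and $\rho\in\mathbb{R}\setminus\{0\}$. The graphing functions are real-valued. *)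

theory Defs
  imports "HOL-Analysis.Analysis"
begin

text \<open>Coefficient data of a rigid hypersurface u = z zbar + sum_{j,k>=2} F_{j,k} z^j zbar^k.
Only the coefficients with j,k >= 2 matter. Admissibility: the graphing function is
real-valued (Hermitian symmetry of coefficients) and the double power series converges
absolutely on some polydisc (real-analyticity).\<close>

definition admissible_coeffs :: "(nat \<Rightarrow> nat \<Rightarrow> complex) \<Rightarrow> bool" where
  "admissible_coeffs F \<longleftrightarrow>
     (\<forall>j\<ge>2. \<forall>k\<ge>2. F k j = cnj (F j k)) \<and>
     (\<exists>r>0. (\<lambda>(j, k). norm (F j k) * r ^ (j + k)) summable_on ({2..} \<times> {2..}))"

definition graph_fun :: "(nat \<Rightarrow> nat \<Rightarrow> complex) \<Rightarrow> complex \<Rightarrow> real" where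
  "graph_fun F z = (cmod z)\<^sup>2 +
     Re (\<Sum>\<^sub>\<infinity>(j, k)\<in>{2..} \<times> {2..}. F j k * z ^ j * cnj z ^ k)"

text \<open>Rigid biholomorphic equivalence of the germs at 0 of {Re w = graph_fun F z} and
{Re w' = graph_fun F' z'}: a local biholomorphism (z,w) -> (f z, rho w + g z), fixing 0
(f, g holomorphic near 0, f' 0 /= 0, rho real nonzero), which on a neighbourhood of the
origin maps points of the first hypersurface exactly to points of the second.\<close>

definition rigid_equivalent ::
    "(nat \<Rightarrow> nat \<Rightarrow> complex) \<Rightarrow> (nat \<Rightarrow> nat \<Rightarrow> complex) \<Rightarrow> bool" where
  "rigid_equivalent F F' \<longleftrightarrow>
     (\<exists>f g (\<rho>::real) r. r > 0 \<and> f holomorphic_on ball 0 r \<and> g holomorphic_on ball 0 r \<and>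
        f 0 = 0 \<and> g 0 = 0 \<and> deriv f 0 \<noteq> 0 \<and> \<rho> \<noteq> 0 \<and>
        (\<exists>e>0. e \<le> r \<and>
          (\<forall>z w. cmod z < e \<and> cmod w < e \<longrightarrow>
             (Re w = graph_fun F z \<longleftrightarrow>
              Re (complex_of_real \<rho> * w + g z) = graph_fun F' (f z)))))"

end

theory Submission
  imports Defs "HOL-Complex_Analysis.Complex_Analysis"
begin



definition Ob :: "(complex \<Rightarrow> complex) \<Rightarrow> nat \<Rightarrow> bool" where
  "Ob E N \<longleftrightarrow> (\<exists>C \<delta>. 0 \<le> C \<and> \<delta> > 0 \<and> (\<forall>z. norm z < \<delta> \<longrightarrow> norm (E z) \<le> C * norm z ^ N))"

lemma ObI: "0 \<le> C \<Longrightarrow> \<delta> > 0 \<Longrightarrow> (\<And>z. norm z < \<delta> \<Longrightarrow> norm (E z) \<le> C * norm z ^ N) \<Longrightarrow> Ob E N"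
  unfolding Ob_def by blast

lemma ObE: assumes "Ob E N"
  obtains C \<delta> where "0 \<le> C" "\<delta> > 0" "\<And>z. norm z < \<delta> \<Longrightarrow> norm (E z) \<le> C * norm z ^ N"
  using assms unfolding Ob_def by blast

lemma Ob_add: assumes "Ob E N" "Ob G N" shows "Ob (\<lambda>z. E z + G z) N"
proof -
  obtain C1 d1 where 1: "0 \<le> C1" "d1 > 0" "\<And>z. norm z < d1 \<Longrightarrow> norm (E z) \<le> C1 * norm z ^ N"
    using assms(1) unfolding Ob_def by blast
  obtain C2 d2 where 2: "0 \<le> C2" "d2 > 0" "\<And>z. norm z < d2 \<Longrightarrow> norm (G z) \<le> C2 * norm z ^ N"
    using assms(2) unfolding Ob_def by blast
  show ?thesis
  proof (rule ObI[of "C1 + C2" "min d1 d2"])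
    fix z :: complex assume "norm z < min d1 d2"
    then have "norm (E z) \<le> C1 * norm z ^ N" "norm (G z) \<le> C2 * norm z ^ N" using 1 2 by auto
    then show "norm (E z + G z) \<le> (C1 + C2) * norm z ^ N"
      by (smt (verit) distrib_right norm_triangle_ineq)
  qed (use 1 2 in auto)
qed

lemma Ob_cmult: assumes "Ob E N" shows "Ob (\<lambda>z. c * E z) N"
proof -
  obtain C1 d1 where 1: "0 \<le> C1" "d1 > 0" "\<And>z. norm z < d1 \<Longrightarrow> norm (E z) \<le> C1 * norm z ^ N"
    using assms(1) unfolding Ob_def by blast
  show ?thesis
  proof (rule ObI[of "norm c * C1" d1])
    fix z :: complex assume "norm z < d1"
    then show "norm (c * E z) \<le> (norm c * C1) * norm z ^ N"
      using 1 by (simp add: norm_mult mult.assoc mult_left_mono)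
  qed (use 1 in auto)
qed

lemma Ob_uminus: assumes "Ob E N" shows "Ob (\<lambda>z. - E z) N"
  using Ob_cmult[OF assms, of "-1"] by simp

lemma Ob_diff: assumes "Ob E N" "Ob G N" shows "Ob (\<lambda>z. E z - G z) N"
  using Ob_add[OF assms(1) Ob_uminus[OF assms(2)]] by simp

lemma Ob_cnj: assumes "Ob E N" shows "Ob (\<lambda>z. cnj (E z)) N"
  using assms unfolding Ob_def by simp

lemma Ob_mult: assumes "Ob E N" "Ob G M" shows "Ob (\<lambda>z. E z * G z) (N + M)"
proof -
  obtain C1 d1 where 1: "0 \<le> C1" "d1 > 0" "\<And>z. norm z < d1 \<Longrightarrow> norm (E z) \<le> C1 * norm z ^ N"
    using assms(1) unfolding Ob_def by blast
  obtain C2 d2 where 2: "0 \<le> C2" "d2 > 0" "\<And>z. norm z < d2 \<Longrightarrow> norm (G z) \<le> C2 * norm z ^ M"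
    using assms(2) unfolding Ob_def by blast
  show ?thesis
  proof (rule ObI[of "C1 * C2" "min d1 d2"])
    fix z :: complex assume "norm z < min d1 d2"
    then have a: "norm (E z) \<le> C1 * norm z ^ N" "norm (G z) \<le> C2 * norm z ^ M" using 1 2 by auto
    have "norm (E z * G z) = norm (E z) * norm (G z)" by (simp add: norm_mult)
    also have "\<dots> \<le> (C1 * norm z ^ N) * (C2 * norm z ^ M)"
      using a 1(1) by (intro mult_mono) auto
    also have "\<dots> = (C1 * C2) * norm z ^ (N + M)" by (simp add: power_add algebra_simps)
    finally show "norm (E z * G z) \<le> (C1 * C2) * norm z ^ (N + M)" .
  qed (use 1 2 in auto)
qed

lemma Ob_mono: assumes "Ob E N" "M \<le> N" shows "Ob E M"
proof -
  obtain C1 d1 where 1: "0 \<le> C1" "d1 > 0" "\<And>z. norm z < d1 \<Longrightarrow> norm (E z) \<le> C1 * norm z ^ N"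
    using assms(1) unfolding Ob_def by blast
  show ?thesis
  proof (rule ObI[of C1 "min d1 1"])
    fix z :: complex assume z: "norm z < min d1 1"
    then have "norm (E z) \<le> C1 * norm z ^ N" using 1 by auto
    also have "\<dots> \<le> C1 * norm z ^ M"
      using z assms(2) 1(1) by (intro mult_left_mono power_decreasing) auto
    finally show "norm (E z) \<le> C1 * norm z ^ M" .
  qed (use 1 in auto)
qed

lemma Ob_zero: "Ob (\<lambda>z. 0) N"
  by (rule ObI[of 0 1]) auto

lemma Ob_pow: "Ob (\<lambda>z. z ^ N) N"
  by (rule ObI[of 1 1]) (auto simp: norm_power)

lemma Ob_const: "Ob (\<lambda>z. c) 0"
  by (rule ObI[of "norm c" 1]) auto

lemma Ob_local: assumes "Ob E N" "\<delta> > 0" "\<And>z. norm z < \<delta> \<Longrightarrow> E z = G z" shows "Ob G N"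
proof -
  obtain C1 d1 where 1: "0 \<le> C1" "d1 > 0" "\<And>z. norm z < d1 \<Longrightarrow> norm (E z) \<le> C1 * norm z ^ N"
    using assms(1) unfolding Ob_def by blast
  show ?thesis
    by (rule ObI[of C1 "min d1 \<delta>"]) (use 1 assms in \<open>auto, metis\<close>)
qed

lemma Ob_sum: assumes "finite A" "\<And>i. i \<in> A \<Longrightarrow> Ob (E i) N" shows "Ob (\<lambda>z. \<Sum>i\<in>A. E i z) N"
  using assms
proof (induction A rule: finite_induct)
  case empty then show ?case by (simp add: Ob_zero)
next
  case (insert x F) then show ?case by (simp add: Ob_add)
qed

lemma Ob_power: assumes "Ob E N" shows "Ob (\<lambda>z. E z ^ k) (N * k)"
proof (induction k)
  case 0 then show ?case using Ob_const[of 1] by simp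
next
  case (Suc k) then show ?case using Ob_mult[OF assms Suc] by (simp add: algebra_simps)
qed

lemma Ob_pow_diff: assumes "Ob u 1" "Ob v 1" "Ob (\<lambda>z. u z - v z) m" "j \<ge> 1"
  shows "Ob (\<lambda>z. u z ^ j - v z ^ j) (m + j - 1)"
  using assms(4)
proof (induction j rule: dec_induct)
  case base then show ?case using assms(3) by simp
next
  case (step j)
  have e: "u z ^ Suc j - v z ^ Suc j = (u z ^ j - v z ^ j) * u z + v z ^ j * (u z - v z)" for z
    by (simp add: algebra_simps)
  have "Ob (\<lambda>z. (u z ^ j - v z ^ j) * u z) (m + j - 1 + 1)" by (rule Ob_mult[OF step.IH assms(1)])
  moreover have "Ob (\<lambda>z. v z ^ j * (u z - v z)) (1 * j + m)" by (rule Ob_mult[OF Ob_power[OF assms(2)] assms(3)])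
  ultimately have "Ob (\<lambda>z. (u z ^ j - v z ^ j) * u z + v z ^ j * (u z - v z)) (m + Suc j - 1)"
    using step.hyps by (intro Ob_add) (auto intro: Ob_mono)
  then show ?case by (simp only: e)
qed

lemma Ob_comp: assumes "Ob R N" "Ob f 1" shows "Ob (\<lambda>z. R (f z)) N"
proof -
  obtain C1 d1 where 1: "0 \<le> C1" "d1 > 0" "\<And>z. norm z < d1 \<Longrightarrow> norm (R z) \<le> C1 * norm z ^ N"
    using assms(1) unfolding Ob_def by blast
  obtain K d2 where 2: "0 \<le> K" "d2 > 0" "\<And>z. norm z < d2 \<Longrightarrow> norm (f z) \<le> K * norm z ^ 1"
    using assms(2) unfolding Ob_def by blast
  show ?thesis
  proof (rule ObI[of "C1 * K ^ N" "min d2 (d1 / (K + 1))"])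
    fix z :: complex assume z: "norm z < min d2 (d1 / (K + 1))"
    then have fz: "norm (f z) \<le> K * norm z" using 2 by auto
    have "K * norm z \<le> (K + 1) * norm z" by (simp add: distrib_right)
    also have "\<dots> < d1" using z 2(1) by (simp add: field_simps)
    finally have "norm (f z) < d1" using fz by linarith
    then have "norm (R (f z)) \<le> C1 * norm (f z) ^ N" using 1 by auto
    also have "\<dots> \<le> C1 * (K * norm z) ^ N" using fz 1(1) by (intro mult_left_mono power_mono) auto
    finally show "norm (R (f z)) \<le> (C1 * K ^ N) * norm z ^ N" by (simp add: power_mult_distrib mult.assoc)
  qed (use 1 2 in auto)
qed




lemma poly_const_zero:
  fixes a :: "nat \<Rightarrow> complex"
  assumes "\<delta> > 0" "\<And>t::real. 0 < t \<Longrightarrow> t < \<delta> \<Longrightarrow> norm (\<Sum>d\<le>N. a d * of_real t ^ d) \<le> C * t ^ Suc n"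
  shows "a 0 = 0"
proof -
  let ?p = "\<lambda>t::real. \<Sum>d\<le>N. a d * of_real t ^ d"
  have "continuous (at_right 0) ?p" by (intro continuous_intros)
  then have l1: "(?p \<longlongrightarrow> ?p 0) (at_right 0)" by (simp add: continuous_within)
  have "?p 0 = a 0" by (simp add: zero_power)
  have g: "((\<lambda>t. C * t ^ Suc n) \<longlongrightarrow> C * 0 ^ Suc n) (at_right 0)"
    by (intro tendsto_intros)
  have ev: "eventually (\<lambda>t. norm (?p t) \<le> C * t ^ Suc n) (at_right (0::real))"
    unfolding eventually_at_right_field using assms by blast
  have l2: "(?p \<longlongrightarrow> 0) (at_right 0)"
    by (rule Lim_null_comparison[OF ev]) (use g in simp)
  have "?p 0 = 0" using tendsto_unique[OF _ l1 l2] by simp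
  then show ?thesis by (simp add: zero_power)
qed

lemma poly_small:
  fixes a :: "nat \<Rightarrow> complex"
  assumes "\<delta> > 0" "\<And>t::real. 0 < t \<Longrightarrow> t < \<delta> \<Longrightarrow> norm (\<Sum>d\<le>N. a d * of_real t ^ d) \<le> C * t ^ Suc n"
  shows "d \<le> n \<Longrightarrow> d \<le> N \<Longrightarrow> a d = 0"
  using assms
proof (induction n arbitrary: a N d C)
  case 0
  then show ?case using poly_const_zero[where \<delta>=\<delta> and N=N and a=a and C=C and n=0] by auto
next
  case (Suc n)
  have a0: "a 0 = 0" using poly_const_zero[where \<delta>=\<delta> and N=N and a=a and C=C and n="Suc n"] Suc.prems by auto
  show ?case
  proof (cases d)
    case 0 then show ?thesis using a0 by simp
  next
    case (Suc d')
    then obtain N' where N': "N = Suc N'" using Suc.prems(2) by (cases N) auto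
    have eq: "(\<Sum>d\<le>N. a d * of_real t ^ d) = of_real t * (\<Sum>d\<le>N'. a (Suc d) * of_real t ^ d)" for t :: real
      unfolding N' sum.atMost_Suc_shift using a0 by (simp add: sum_distrib_left algebra_simps)
    have "norm (\<Sum>d\<le>N'. a (Suc d) * of_real t ^ d) \<le> C * t ^ Suc n" if t: "0 < t" "t < \<delta>" for t :: real
    proof -
      have "t * norm (\<Sum>d\<le>N'. a (Suc d) * of_real t ^ d) \<le> t * (C * t ^ Suc n)"
        using Suc.prems(4)[OF t] t unfolding eq by (simp add: norm_mult algebra_simps)
      then show ?thesis using t by simp
    qed
    then have "a (Suc d') = 0"
      using Suc.IH[where d=d' and N=N' and a="\<lambda>d. a (Suc d)" and C=C] Suc.prems \<open>d = Suc d'\<close> N' by auto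
    then show ?thesis using \<open>d = Suc d'\<close> by simp
  qed
qed

lemma unit_circle_infinite: "infinite {w::complex. norm w = 1}"
proof
  assume fin: "finite {w::complex. norm w = 1}"
  have "cis ` {0<..<1} \<subseteq> {w::complex. norm w = 1}" by auto
  then have "finite (cis ` {0<..<(1::real)})" using fin finite_subset by blast
  moreover have "inj_on cis {0<..<(1::real)}"
  proof (rule inj_onI)
    fix x y :: real assume "x \<in> {0<..<1}" "y \<in> {0<..<1}" "cis x = cis y"
    moreover have "x \<in> {0<..<1} \<Longrightarrow> Arg (cis x) = x" for x :: real
      by (rule cis_Arg_unique) (use pi_gt3 in \<open>auto simp: sgn_div_norm\<close>)
    ultimately show "x = y" by metis
  qed
  ultimately have "finite {0<..<(1::real)}" using finite_imageD by blast
  then show False using infinite_Ioo[of "0::real" 1] by simp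
qed

lemma polyid:
  fixes c :: "nat \<Rightarrow> nat \<Rightarrow> complex"
  assumes ob: "Ob (\<lambda>z. \<Sum>j\<le>M. \<Sum>k\<le>M. c j k * z ^ j * cnj z ^ k) (Suc n)"
    and jk: "j + k \<le> n" "j \<le> M" "k \<le> M"
  shows "c j k = 0"
proof -
  obtain C \<delta> where C: "0 \<le> C" "\<delta> > 0"
    "\<And>z. norm z < \<delta> \<Longrightarrow> norm (\<Sum>j\<le>M. \<Sum>k\<le>M. c j k * z ^ j * cnj z ^ k) \<le> C * norm z ^ Suc n"
    using ob unfolding Ob_def by blast
  define p where "p u d = (\<Sum>j\<le>M. \<Sum>k\<le>M. if j + k = d then c j k * u ^ j * cnj u ^ k else 0)" for u :: complex and d
  have pd0: "p u d = 0" if u: "norm u = 1" and d: "d \<le> n" "d \<le> 2*M" for u d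
  proof -
    have expand: "(\<Sum>j\<le>M. \<Sum>k\<le>M. c j k * (of_real t * u) ^ j * cnj (of_real t * u) ^ k)
        = (\<Sum>d\<le>2*M. p u d * of_real t ^ d)" for t :: real
    proof -
      have "(\<Sum>d\<le>2*M. p u d * of_real t ^ d) =
          (\<Sum>d\<le>2*M. \<Sum>j\<le>M. \<Sum>k\<le>M. (if j + k = d then c j k * u ^ j * cnj u ^ k else 0) * of_real t ^ d)"
        unfolding p_def by (simp add: sum_distrib_right)
      also have "\<dots> = (\<Sum>j\<le>M. \<Sum>k\<le>M. \<Sum>d\<le>2*M. (if j + k = d then c j k * u ^ j * cnj u ^ k else 0) * of_real t ^ d)"
        by (subst sum.swap) (subst (2) sum.swap, rule refl)
      also have "\<dots> = (\<Sum>j\<le>M. \<Sum>k\<le>M. c j k * (of_real t * u) ^ j * cnj (of_real t * u) ^ k)"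
      proof (intro sum.cong refl)
        fix j k assume "j \<in> {..M}" "k \<in> {..M}"
        then have "j + k \<le> 2 * M" by simp
        then have "(\<Sum>d\<le>2*M. (if j + k = d then c j k * u ^ j * cnj u ^ k else 0) * of_real t ^ d)
            = c j k * u ^ j * cnj u ^ k * of_real t ^ (j + k)"
          by (simp add: if_distrib[of "\<lambda>x. x * _"] cong: if_cong)
        also have "\<dots> = c j k * (of_real t * u) ^ j * cnj (of_real t * u) ^ k"
          by (simp add: power_mult_distrib power_add)
        finally show "(\<Sum>d\<le>2*M. (if j + k = d then c j k * u ^ j * cnj u ^ k else 0) * of_real t ^ d)
            = c j k * (of_real t * u) ^ j * cnj (of_real t * u) ^ k" .
      qed
      finally show ?thesis by simp
    qed
    have "norm (\<Sum>d\<le>2*M. p u d * of_real t ^ d) \<le> C * t ^ Suc n" if t: "0 < t" "t < \<delta>" for t :: real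
    proof -
      have "norm (of_real t * u) = t" using t u by (simp add: norm_mult)
      then show ?thesis using C(3)[of "of_real t * u"] t unfolding expand by simp
    qed
    from poly_small[where \<delta>=\<delta> and N="2*M" and a="p u" and C=C and n=n and d=d, OF C(2) this] show ?thesis using d jk by simp
  qed
  define d where "d = j + k"
  define h where "h i = (if i \<le> d \<and> d - i \<le> M then c i (d - i) else 0)" for i
  have hroot: "(\<Sum>i\<le>M. h i * w ^ i) = 0" if w: "norm w = 1" for w :: complex
  proof -
    define u where "u = csqrt w"
    have u1: "norm u = 1" using w by (simp add: u_def norm_csqrt)
    have uw: "u ^ 2 = w" by (simp add: u_def)
    have cu: "cnj u = inverse u"
    proof -
      have "u * cnj u = 1" using u1 by (metis complex_norm_square mult.commute of_real_1 power_one)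
      then show ?thesis by (metis divide_self_if inverse_eq_divide mult_cancel_left2 nonzero_mult_div_cancel_left zero_neq_one)
    qed
    have u0: "u \<noteq> 0" using u1 by auto
    have "u ^ d * p u d = (\<Sum>j\<le>M. \<Sum>k\<le>M. if j + k = d then c j k * u ^ (2 * j) else 0)"
      unfolding p_def sum_distrib_left
    proof (intro sum.cong refl)
      fix j k assume "j \<in> {..M}" "k \<in> {..M}"
      show "u ^ d * (if j + k = d then c j k * u ^ j * cnj u ^ k else 0) = (if j + k = d then c j k * u ^ (2 * j) else 0)"
      proof (cases "j + k = d")
        case True
        have "u ^ (j + k) * (c j k * u ^ j * inverse u ^ k) = c j k * u ^ (2 * j) * (u ^ k * inverse u ^ k)"
          by (simp add: power_add mult_2 power_mult_distrib)
        also have "u ^ k * inverse u ^ k = 1" using u0 by (simp add: power_inverse[symmetric] field_simps)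
        finally show ?thesis using True cu by simp
      qed simp
    qed
    also have "\<dots> = (\<Sum>j\<le>M. h j * w ^ j)"
    proof (intro sum.cong refl)
      fix j assume "j \<in> {..M}"
      have "(\<Sum>k\<le>M. if j + k = d then c j k * u ^ (2 * j) else 0)
          = (\<Sum>k\<le>M. if k = d - j then (if j \<le> d then c j k * u ^ (2 * j) else 0) else 0)"
        by (intro sum.cong refl) auto
      also have "\<dots> = h j * w ^ j" unfolding h_def uw[symmetric]
        by (simp add: power_mult[symmetric] mult.commute)
      finally show "(\<Sum>k\<le>M. if j + k = d then c j k * u ^ (2 * j) else 0) = h j * w ^ j" .
    qed
    finally show ?thesis using pd0[OF u1, of d] jk by (simp add: d_def)
  qed
  have "{w::complex. norm w = 1} \<subseteq> {w. (\<Sum>i\<le>M. h i * w ^ i) = 0}" using hroot by auto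
  then have "infinite {w. (\<Sum>i\<le>M. h i * w ^ i) = 0}" using unit_circle_infinite finite_subset by blast
  then have "\<forall>i\<le>M. h i = 0" using Poly_Roots.polyfun_finite_roots by blast
  then have "h j = 0" using jk by simp
  then show ?thesis using jk by (simp add: h_def d_def)
qed




definition tc :: "(complex \<Rightarrow> complex) \<Rightarrow> nat \<Rightarrow> complex" where
  "tc f m = (deriv ^^ m) f 0 / fact m"

lemma taylor_Ob:
  assumes hol: "f holomorphic_on ball 0 r" and r: "r > 0"
  shows "Ob (\<lambda>z. f z - (\<Sum>m<N. tc f m * z ^ m)) N"
proof -
  have ps: "(\<lambda>m. tc f m * w ^ m) sums f w" if "w \<in> ball 0 r" for w
    using holomorphic_power_series[OF hol that] by (simp add: tc_def)
  define s1 where "s1 = r / 2"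
  define s2 where "s2 = r / 4"
  have s: "0 < s2" "s2 < s1" "s1 < r" using r by (auto simp: s1_def s2_def)
  have sm1: "summable (\<lambda>m. tc f m * of_real s1 ^ m)"
    using ps[of "of_real s1"] s by (auto simp: sums_iff)
  have sm2: "summable (\<lambda>m. norm (tc f m * of_real s2 ^ m))"
    by (rule powser_insidea[OF sm1]) (use s in simp)
  have sm3: "summable (\<lambda>m. norm (tc f (m + N) * of_real s2 ^ (m + N)))"
    using sm2 summable_iff_shift[of "\<lambda>m. norm (tc f m * of_real s2 ^ m)" N] by simp
  define S where "S = (\<Sum>m. norm (tc f (m + N) * of_real s2 ^ (m + N)))"
  have S0: "S \<ge> 0" unfolding S_def by (rule suminf_nonneg[OF sm3]) simp
  show ?thesis
  proof (rule ObI[of "S / s2 ^ N" s2])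
    fix z :: complex assume z: "norm z < s2"
    then have zb: "z \<in> ball 0 r" using s by simp
    have sums: "(\<lambda>m. tc f (m + N) * z ^ (m + N)) sums (f z - (\<Sum>m<N. tc f m * z ^ m))"
      using sums_split_initial_segment[OF ps[OF zb], of N] by simp
    have "norm (f z - (\<Sum>m<N. tc f m * z ^ m)) = norm (\<Sum>m. tc f (m + N) * z ^ (m + N))"
      using sums by (simp add: sums_iff)
    also have "\<dots> \<le> (\<Sum>m. norm (tc f (m + N) * of_real s2 ^ (m + N)) * (norm z / s2) ^ N)"
    proof (rule norm_suminf_le)
      fix m
      have "norm z ^ (m + N) = norm z ^ m * norm z ^ N" by (simp add: power_add)
      also have "\<dots> \<le> s2 ^ m * norm z ^ N"
        using z by (intro mult_right_mono power_mono) auto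
      also have "\<dots> = s2 ^ (m + N) * (norm z / s2) ^ N"
        using s by (simp add: power_add power_divide)
      finally have "norm z ^ (m + N) \<le> s2 ^ (m + N) * (norm z / s2) ^ N" .
      then have "norm (tc f (m + N)) * norm z ^ (m + N) \<le> norm (tc f (m + N)) * (s2 ^ (m + N) * (norm z / s2) ^ N)"
        by (rule mult_left_mono) simp
      then show "norm (tc f (m + N) * z ^ (m + N)) \<le> norm (tc f (m + N) * of_real s2 ^ (m + N)) * (norm z / s2) ^ N"
        using s by (simp add: norm_mult norm_power mult.assoc)
    next
      show "summable (\<lambda>m. norm (tc f (m + N) * of_real s2 ^ (m + N)) * (norm z / s2) ^ N)"
        by (rule summable_mult2[OF sm3])
    qed
    also have "\<dots> = S * (norm z / s2) ^ N"
      unfolding S_def by (rule suminf_mult2[OF sm3, symmetric])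
    also have "\<dots> = S / s2 ^ N * norm z ^ N" by (simp add: power_divide)
    finally show "norm (f z - (\<Sum>m<N. tc f m * z ^ m)) \<le> S / s2 ^ N * norm z ^ N" .
  qed (use S0 s in auto)
qed

definition Sser :: "(nat \<Rightarrow> nat \<Rightarrow> complex) \<Rightarrow> complex \<Rightarrow> complex" where
  "Sser F z = (\<Sum>\<^sub>\<infinity>(j, k)\<in>{2..} \<times> {2..}. F j k * z ^ j * cnj z ^ k)"

definition Tpol :: "(nat \<Rightarrow> nat \<Rightarrow> complex) \<Rightarrow> nat \<Rightarrow> complex \<Rightarrow> complex" where
  "Tpol F n z = (\<Sum>j\<le>n. \<Sum>k\<le>n. (if 2 \<le> j \<and> 2 \<le> k \<and> j + k \<le> n then F j k else 0) * z ^ j * cnj z ^ k)"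

lemma trunc_Ob:
  assumes adm: "admissible_coeffs F"
  shows "Ob (\<lambda>z. Sser F z - Tpol F n z) (Suc n)"
proof -
  define A where "A = ({2..} \<times> {2..} :: (nat \<times> nat) set)"
  obtain r where r: "r > 0" and sumr: "(\<lambda>(j, k). norm (F j k) * r ^ (j + k)) summable_on A"
    using adm unfolding admissible_coeffs_def A_def by blast
  define B where "B = {p \<in> A. fst p + snd p \<le> n}"
  have Bsub: "B \<subseteq> {..n} \<times> {..n}" unfolding B_def A_def by auto
  have finB: "finite B" by (rule finite_subset[OF Bsub]) auto
  have BA: "B \<subseteq> A" unfolding B_def by auto
  define K where "K = (\<Sum>\<^sub>\<infinity>(j, k)\<in>A. norm (F j k) * r ^ (j + k))"
  have K0: "K \<ge> 0" unfolding K_def by (rule infsum_nonneg) (use r in auto)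
  show ?thesis
  proof (rule ObI[of "K / r ^ Suc n" r])
    fix z :: complex assume z: "norm z < r"
    define h where "h = (\<lambda>(j, k). F j k * z ^ j * cnj z ^ k)"
    have hb: "norm (h p) \<le> (\<lambda>(j, k). norm (F j k) * r ^ (j + k)) p" for p
    proof -
      obtain j k where p: "p = (j, k)" by force
      have "norm z ^ (j + k) \<le> r ^ (j + k)" using z by (intro power_mono) auto
      then have "norm (F j k) * norm z ^ (j + k) \<le> norm (F j k) * r ^ (j + k)"
        by (rule mult_left_mono) simp
      then show ?thesis by (simp add: p h_def norm_mult norm_power power_add mult.assoc)
    qed
    have habs: "(\<lambda>p. norm (h p)) summable_on A"
      by (rule Infinite_Sum.abs_summable_on_comparison_test'[OF sumr]) (use hb in auto)
    have hA: "h summable_on A" by (rule abs_summable_summable[OF habs])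
    have hB: "h summable_on B" by (rule summable_on_subset[OF hA BA])
    have T: "Tpol F n z = sum h B"
    proof -
      have "Tpol F n z = (\<Sum>p\<in>{..n} \<times> {..n}. if p \<in> B then h p else 0)"
        unfolding Tpol_def sum.cartesian_product'
        by (intro sum.cong refl) (auto simp: B_def A_def h_def)
      also have "\<dots> = sum h (({..n} \<times> {..n}) \<inter> B)"
        by (rule sum.inter_restrict[symmetric]) auto
      also have "({..n} \<times> {..n}) \<inter> B = B" using Bsub by auto
      finally show ?thesis .
    qed
    have S: "Sser F z = infsum h A" unfolding Sser_def h_def A_def by simp
    have diff: "Sser F z - Tpol F n z = infsum h (A - B)"
      unfolding S T infsum_Diff[OF hA hB BA] infsum_finite[OF finB] by simp
    have nA: "(\<lambda>p. norm (h p)) summable_on (A - B)"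
      using summable_on_subset[OF habs] by auto
    define q where "q = (norm z / r) ^ Suc n"
    have q0: "q \<ge> 0" unfolding q_def using r by simp
    have g1: "(\<lambda>p. (\<lambda>(j, k). norm (F j k) * r ^ (j + k)) p * q) summable_on (A - B)"
      by (rule summable_on_cmult_left, rule summable_on_subset[OF sumr]) auto
    have "norm (infsum h (A - B)) \<le> (\<Sum>\<^sub>\<infinity>p\<in>A - B. norm (h p))"
      by (rule norm_infsum_bound[OF nA])
    also have "\<dots> \<le> (\<Sum>\<^sub>\<infinity>p\<in>A - B. (\<lambda>(j, k). norm (F j k) * r ^ (j + k)) p * q)"
    proof (rule infsum_mono[OF nA g1])
      fix p assume p: "p \<in> A - B"
      obtain j k where pj: "p = (j, k)" by force
      have jk: "Suc n \<le> j + k" using p unfolding pj B_def by auto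
      have "norm z ^ (j + k) = r ^ (j + k) * (norm z / r) ^ (j + k)"
        using r by (simp add: power_divide)
      also have "\<dots> \<le> r ^ (j + k) * q"
        unfolding q_def using z r jk by (intro mult_left_mono power_decreasing) auto
      finally have "norm (F j k) * norm z ^ (j + k) \<le> norm (F j k) * (r ^ (j + k) * q)"
        by (rule mult_left_mono) simp
      then show "norm (h p) \<le> (\<lambda>(j, k). norm (F j k) * r ^ (j + k)) p * q"
        by (simp add: pj h_def norm_mult norm_power power_add mult.assoc)
    qed
    also have "\<dots> = (\<Sum>\<^sub>\<infinity>p\<in>A - B. (\<lambda>(j, k). norm (F j k) * r ^ (j + k)) p) * q"
      by (rule infsum_cmult_left')
    also have "\<dots> \<le> K * q"
    proof (rule mult_right_mono[OF _ q0])
      show "(\<Sum>\<^sub>\<infinity>p\<in>A - B. (\<lambda>(j, k). norm (F j k) * r ^ (j + k)) p) \<le> K"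
        unfolding K_def
        by (rule infsum_mono2[OF summable_on_subset[OF sumr] sumr]) (use r in auto)
    qed
    also have "\<dots> = K / r ^ Suc n * norm z ^ Suc n" unfolding q_def by (simp add: power_divide)
    finally show "norm (Sser F z - Tpol F n z) \<le> K / r ^ Suc n * norm z ^ Suc n"
      unfolding diff .
  qed (use K0 r in auto)
qed




definition pz :: "nat \<Rightarrow> (nat \<Rightarrow> nat \<Rightarrow> complex) \<Rightarrow> complex \<Rightarrow> complex" where
  "pz M c z = (\<Sum>j\<le>M. \<Sum>k\<le>M. c j k * z ^ j * cnj z ^ k)"

lemma pz_add: "pz M (\<lambda>j k. c j k + d j k) z = pz M c z + pz M d z"
  unfolding pz_def by (simp add: sum.distrib distrib_right)

lemma pz_diff: "pz M (\<lambda>j k. c j k - d j k) z = pz M c z - pz M d z"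
  unfolding pz_def by (simp add: sum_subtractf left_diff_distrib)

lemma pz_cmult: "pz M (\<lambda>j k. s * c j k) z = s * pz M c z"
  unfolding pz_def by (simp add: sum_distrib_left mult.assoc)

lemma pz_mono: assumes "p \<le> M" "q \<le> M"
  shows "pz M (\<lambda>j k. if j = p \<and> k = q then s else 0) z = s * z ^ p * cnj z ^ q"
proof -
  have "pz M (\<lambda>j k. if j = p \<and> k = q then s else 0) z
      = (\<Sum>j\<le>M. \<Sum>k\<le>M. if j = p then (if k = q then s * z ^ j * cnj z ^ k else 0) else 0)"
    unfolding pz_def by (intro sum.cong refl) auto
  also have "\<dots> = (\<Sum>j\<le>M. if j = p then (\<Sum>k\<le>M. if k = q then s * z ^ j * cnj z ^ k else 0) else 0)"
    by (intro sum.cong refl) auto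
  also have "\<dots> = (\<Sum>k\<le>M. if k = q then s * z ^ p * cnj z ^ k else 0)"
    by (simp only: sum.delta[OF finite_atMost]) (simp add: assms)
  also have "\<dots> = s * z ^ p * cnj z ^ q"
    by (simp only: sum.delta[OF finite_atMost]) (simp add: assms)
  finally show ?thesis .
qed

lemma pz_cnj: "cnj (pz M c z) = pz M (\<lambda>j k. cnj (c k j)) z"
proof -
  have "cnj (pz M c z) = (\<Sum>j\<le>M. \<Sum>k\<le>M. cnj (c j k) * z ^ k * cnj z ^ j)"
    unfolding pz_def by (simp add: mult.commute mult.left_commute)
  also have "\<dots> = (\<Sum>k\<le>M. \<Sum>j\<le>M. cnj (c j k) * z ^ k * cnj z ^ j)" by (rule sum.swap)
  finally show ?thesis unfolding pz_def .
qed

lemma pz_col: "pz M (\<lambda>j k. if k = 0 then b j else 0) z = (\<Sum>j\<le>M. b j * z ^ j)"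
  unfolding pz_def by (intro sum.cong refl) (simp add: if_distrib[of "\<lambda>x. x * _"] cong: if_cong)

lemma pz_row: "pz M (\<lambda>j k. if j = 0 then b k else 0) z = (\<Sum>k\<le>M. b k * cnj z ^ k)"
proof -
  have "pz M (\<lambda>j k. if j = 0 then b k else 0) z = (\<Sum>j\<le>M. if j = 0 then (\<Sum>k\<le>M. b k * cnj z ^ k) else 0)"
    unfolding pz_def by (intro sum.cong refl) auto
  then show ?thesis by simp
qed

lemma Tpol_pz: "Tpol F n z = pz n (\<lambda>j k. if 2 \<le> j \<and> 2 \<le> k \<and> j + k \<le> n then F j k else 0) z"
  unfolding Tpol_def pz_def ..

lemma Tpol_scale: "Tpol F n (a * z) = pz n (\<lambda>j k. (if 2 \<le> j \<and> 2 \<le> k \<and> j + k \<le> n then F j k else 0) * a ^ j * cnj a ^ k) z"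
  unfolding Tpol_def pz_def by (intro sum.cong refl) (simp add: power_mult_distrib)

lemma gf_complex: "complex_of_real (graph_fun F z) = z * cnj z + (Sser F z + cnj (Sser F z)) / 2"
proof -
  have "complex_of_real (Re (Sser F z)) = (Sser F z + cnj (Sser F z)) / 2"
    by (simp add: complex_add_cnj)
  then show ?thesis
    unfolding graph_fun_def Sser_def by (simp add: complex_norm_square[symmetric])
qed




lemma tc0: "tc f 0 = f 0" by (simp add: tc_def)
lemma tc1: "tc f (Suc 0) = deriv f 0" by (simp add: tc_def)

lemma Ob_cnj_pow: "Ob (\<lambda>z. cnj z ^ N) N"
  by (rule ObI[of 1 1]) (auto simp: norm_power)

lemma pz_divide: "pz M (\<lambda>j k. c j k / s) z = pz M c z / s"
  unfolding pz_def by (simp add: sum_divide_distrib)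

lemma Ob_divide: "Ob E N \<Longrightarrow> Ob (\<lambda>z. E z / c) N"
  using Ob_cmult[of E N "inverse c"] by (simp add: divide_inverse mult.commute)

lemma main_step:
  assumes admF: "admissible_coeffs F" and admF': "admissible_coeffs F'"
    and hf: "f holomorphic_on ball 0 r" and hg: "g holomorphic_on ball 0 r" and r: "r > 0"
    and f0: "f 0 = 0" and g0: "g 0 = 0"
    and \<delta>: "\<delta> > 0" and eq: "\<And>z. norm z < \<delta> \<Longrightarrow> \<rho> * graph_fun F z + Re (g z) = graph_fun F' (f z)"
    and n: "n \<ge> 3" and van: "\<And>m. 2 \<le> m \<Longrightarrow> m < n - 1 \<Longrightarrow> tc f m = 0"
  shows "deriv f 0 * cnj (tc f (n - 1)) = 0 \<and> complex_of_real \<rho> = deriv f 0 * cnj (deriv f 0) \<and>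
    (\<forall>j k. 2 \<le> j \<longrightarrow> 2 \<le> k \<longrightarrow> j + k \<le> n \<longrightarrow>
       complex_of_real \<rho> * (F j k + cnj (F k j)) = (F' j k + cnj (F' k j)) * deriv f 0 ^ j * cnj (deriv f 0) ^ k)"
proof -
  define a where "a = deriv f 0"
  define \<beta> where "\<beta> = tc f (n - 1)"
  define b where "b = tc g"
  have b0: "b 0 = 0" by (simp add: b_def tc0 g0)
  have sumf: "(\<Sum>m<n. tc f m * z ^ m) = a * z + \<beta> * z ^ (n - 1)" for z
  proof -
    have "(\<Sum>m<n. tc f m * z ^ m) = (\<Sum>m<n. (if m = 1 then a * z ^ m else 0) + (if m = n - 1 then \<beta> * z ^ m else 0))"
    proof (intro sum.cong refl)
      fix m assume m: "m \<in> {..<n}"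
      consider "m = 0" | "m = 1" | "2 \<le> m \<and> m < n - 1" | "m = n - 1" using m by force
      then show "tc f m * z ^ m = (if m = 1 then a * z ^ m else 0) + (if m = n - 1 then \<beta> * z ^ m else 0)"
        by cases (use n van in \<open>auto simp: tc0 f0 tc1 a_def \<beta>_def\<close>)
    qed
    also have "\<dots> = a * z + \<beta> * z ^ (n - 1)"
      using n by (simp add: sum.distrib)
    finally show ?thesis .
  qed
  define e where "e z = f z - a * z - \<beta> * z ^ (n - 1)" for z
  have Oe: "Ob e n" using taylor_Ob[OF hf r, of n] unfolding sumf e_def by (simp add: algebra_simps)
  have Ofa: "Ob (\<lambda>z. f z - a * z) (n - 1)"
  proof -
    have "Ob (\<lambda>z. \<beta> * z ^ (n - 1) + e z) (n - 1)"
      by (intro Ob_add Ob_cmult Ob_pow Ob_mono[OF Oe]) auto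
    then show ?thesis by (simp add: e_def)
  qed
  have Oaz: "Ob (\<lambda>z. a * z) 1" using Ob_cmult[OF Ob_pow[of 1], of a] by simp
  have Of1: "Ob f 1"
  proof -
    have "Ob (\<lambda>z. a * z + (f z - a * z)) 1"
      by (intro Ob_add Oaz Ob_mono[OF Ofa]) (use n in auto)
    then show ?thesis by simp
  qed
  define G where "G z = (\<Sum>m\<le>n. b m * z ^ m)" for z
  have P1: "Ob (\<lambda>z. Sser F z - Tpol F n z) (Suc n)" by (rule trunc_Ob[OF admF])
  have P2: "Ob (\<lambda>z. g z - G z) (Suc n)"
    using taylor_Ob[OF hg r, of "Suc n"] by (simp add: G_def b_def lessThan_Suc_atMost)
  define U where "U z = a * cnj a * z * cnj z + a * cnj \<beta> * z * cnj z ^ (n - 1) + cnj a * \<beta> * z ^ (n - 1) * cnj z" for z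
  have P3: "Ob (\<lambda>z. f z * cnj (f z) - U z) (Suc n)"
  proof -
    define u where "u z = a * z + \<beta> * z ^ (n - 1)" for z
    have Ou: "Ob u 1" unfolding u_def
      by (intro Ob_add Oaz Ob_cmult Ob_mono[OF Ob_pow]) (use n in auto)
    have id: "f z * cnj (f z) - U z = e z * cnj (u z) + u z * cnj (e z) + e z * cnj (e z)
        + \<beta> * cnj \<beta> * (z ^ (n - 1) * cnj z ^ (n - 1))" for z
    proof -
      have fz: "f z = u z + e z" by (simp add: e_def u_def)
      show ?thesis unfolding fz U_def u_def by (simp add: algebra_simps)
    qed
    have "Ob (\<lambda>z. e z * cnj (u z) + u z * cnj (e z) + e z * cnj (e z)
        + \<beta> * cnj \<beta> * (z ^ (n - 1) * cnj z ^ (n - 1))) (Suc n)"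
    proof (intro Ob_add)
      show "Ob (\<lambda>z. e z * cnj (u z)) (Suc n)" using Ob_mult[OF Oe Ob_cnj[OF Ou]] by simp
      show "Ob (\<lambda>z. u z * cnj (e z)) (Suc n)" using Ob_mult[OF Ou Ob_cnj[OF Oe]] by simp
      show "Ob (\<lambda>z. e z * cnj (e z)) (Suc n)"
        by (rule Ob_mono[OF Ob_mult[OF Oe Ob_cnj[OF Oe]]]) (use n in auto)
      show "Ob (\<lambda>z. \<beta> * cnj \<beta> * (z ^ (n - 1) * cnj z ^ (n - 1))) (Suc n)"
        by (intro Ob_cmult Ob_mono[OF Ob_mult[OF Ob_pow Ob_cnj_pow]]) (use n in auto)
    qed
    then show ?thesis by (simp only: id)
  qed
  have P4: "Ob (\<lambda>z. Sser F' (f z) - Tpol F' n (f z)) (Suc n)"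
    by (rule Ob_comp[OF trunc_Ob[OF admF'] Of1])
  have P5: "Ob (\<lambda>z. Tpol F' n (f z) - Tpol F' n (a * z)) (Suc n)"
  proof -
    have id: "Tpol F' n (f z) - Tpol F' n (a * z) = (\<Sum>j\<le>n. \<Sum>k\<le>n.
        (if 2 \<le> j \<and> 2 \<le> k \<and> j + k \<le> n then F' j k else 0) *
          ((f z ^ j - (a * z) ^ j) * cnj (f z) ^ k + (a * z) ^ j * (cnj (f z) ^ k - cnj (a * z) ^ k)))" for z
      unfolding Tpol_def by (simp add: sum_subtractf[symmetric] algebra_simps)
    have "Ob (\<lambda>z. \<Sum>j\<le>n. \<Sum>k\<le>n.
        (if 2 \<le> j \<and> 2 \<le> k \<and> j + k \<le> n then F' j k else 0) *
          ((f z ^ j - (a * z) ^ j) * cnj (f z) ^ k + (a * z) ^ j * (cnj (f z) ^ k - cnj (a * z) ^ k))) (Suc n)"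
    proof (intro Ob_sum finite_atMost)
      fix j k assume "j \<in> {..n}" "k \<in> {..n}"
      show "Ob (\<lambda>z. (if 2 \<le> j \<and> 2 \<le> k \<and> j + k \<le> n then F' j k else 0) *
          ((f z ^ j - (a * z) ^ j) * cnj (f z) ^ k + (a * z) ^ j * (cnj (f z) ^ k - cnj (a * z) ^ k))) (Suc n)"
      proof (cases "2 \<le> j \<and> 2 \<le> k \<and> j + k \<le> n")
        case False
        then have z: "(if 2 \<le> j \<and> 2 \<le> k \<and> j + k \<le> n then F' j k else 0) = 0" by auto
        show ?thesis unfolding z mult_zero_left by (rule Ob_zero)
      next
        case True
        have A: "Ob (\<lambda>z. f z ^ j - (a * z) ^ j) (n - 1 + j - 1)"
          by (rule Ob_pow_diff[OF Of1 Oaz Ofa]) (use True in auto)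
        have B: "Ob (\<lambda>z. cnj (f z) ^ k) (1 * k)" by (rule Ob_power[OF Ob_cnj[OF Of1]])
        have C: "Ob (\<lambda>z. (a * z) ^ j) (1 * j)" by (rule Ob_power[OF Oaz])
        have Ofa': "Ob (\<lambda>z. cnj (f z) - cnj (a * z)) (n - 1)" using Ob_cnj[OF Ofa] by simp
        have D: "Ob (\<lambda>z. cnj (f z) ^ k - cnj (a * z) ^ k) (n - 1 + k - 1)"
          by (rule Ob_pow_diff[OF Ob_cnj[OF Of1] Ob_cnj[OF Oaz] Ofa']) (use True in auto)
        have "Ob (\<lambda>z. (f z ^ j - (a * z) ^ j) * cnj (f z) ^ k + (a * z) ^ j * (cnj (f z) ^ k - cnj (a * z) ^ k)) (Suc n)"
          by (intro Ob_add Ob_mono[OF Ob_mult[OF A B]] Ob_mono[OF Ob_mult[OF C D]]) (use True n in auto)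
        then show ?thesis by (rule Ob_cmult)
      qed
    qed
    then show ?thesis by (simp only: id)
  qed
  define Q where "Q z = of_real \<rho> * z * cnj z + of_real \<rho> * (Tpol F n z + cnj (Tpol F n z)) / 2
     + (G z + cnj (G z)) / 2 - U z - (Tpol F' n (a * z) + cnj (Tpol F' n (a * z))) / 2" for z
  define E where "E z = complex_of_real (\<rho> * graph_fun F z + Re (g z) - graph_fun F' (f z))" for z
  have E0: "norm z < \<delta> \<Longrightarrow> E z = 0" for z using eq[of z] by (simp add: E_def)
  have EQ: "E z - Q z = of_real \<rho> * ((Sser F z - Tpol F n z) + cnj (Sser F z - Tpol F n z)) / 2
      + ((g z - G z) + cnj (g z - G z)) / 2 - (f z * cnj (f z) - U z)
      - (((Sser F' (f z) - Tpol F' n (f z)) + (Tpol F' n (f z) - Tpol F' n (a * z)))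
         + cnj ((Sser F' (f z) - Tpol F' n (f z)) + (Tpol F' n (f z) - Tpol F' n (a * z)))) / 2" for z
  proof -
    have "E z = of_real \<rho> * complex_of_real (graph_fun F z) + complex_of_real (Re (g z)) - complex_of_real (graph_fun F' (f z))"
      by (simp add: E_def)
    also have "complex_of_real (Re (g z)) = (g z + cnj (g z)) / 2" by (simp add: complex_add_cnj)
    finally show ?thesis unfolding gf_complex Q_def by (simp add: algebra_simps add_divide_distrib diff_divide_distrib)
  qed
  have OEQ: "Ob (\<lambda>z. E z - Q z) (Suc n)"
    unfolding EQ
    by (intro Ob_add Ob_diff Ob_divide Ob_cmult Ob_cnj P1 P2 P3 P4 P5)
  have OQ: "Ob Q (Suc n)"
    by (rule Ob_local[OF Ob_uminus[OF OEQ] \<delta>]) (simp add: E0)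
  define Fn where "Fn j k = (if 2 \<le> j \<and> 2 \<le> k \<and> j + k \<le> n then F j k else 0)" for j k
  define Fa where "Fa j k = (if 2 \<le> j \<and> 2 \<le> k \<and> j + k \<le> n then F' j k else 0) * a ^ j * cnj a ^ k" for j k
  define c where "c j k = of_real \<rho> * (if j = 1 \<and> k = 1 then 1 else 0) + of_real \<rho> * (Fn j k + cnj (Fn k j)) / 2
     + ((if k = 0 then b j else 0) + (if j = 0 then cnj (b k) else 0)) / 2
     - ((if j = 1 \<and> k = 1 then a * cnj a else 0) + (if j = 1 \<and> k = n - 1 then a * cnj \<beta> else 0)
        + (if j = n - 1 \<and> k = 1 then cnj a * \<beta> else 0))
     - (Fa j k + cnj (Fa k j)) / 2" for j k
  have cQ: "pz n c z = Q z" for z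
  proof -
    have c_eq: "c = (\<lambda>j k. of_real \<rho> * (if j = 1 \<and> k = 1 then 1 else 0) + of_real \<rho> * (Fn j k + cnj (Fn k j)) / 2
     + ((if k = 0 then b j else 0) + (if j = 0 then cnj (b k) else 0)) / 2
     - ((if j = 1 \<and> k = 1 then a * cnj a else 0) + (if j = 1 \<and> k = n - 1 then a * cnj \<beta> else 0)
        + (if j = n - 1 \<and> k = 1 then cnj a * \<beta> else 0))
     - (Fa j k + cnj (Fa k j)) / 2)" by (simp add: c_def fun_eq_iff)
    have 1: "1 \<le> n" "n - 1 \<le> n" using n by auto
    show ?thesis
      unfolding c_eq
      apply (simp only: pz_add pz_diff pz_divide pz_cmult pz_cnj[symmetric])
      apply (simp only: pz_mono[OF 1(1) 1(1)] pz_mono[OF 1(1) 1(2)] pz_mono[OF 1(2) 1(1)] pz_col pz_row)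
      apply (simp only: Fn_def Fa_def Tpol_pz[symmetric] Tpol_scale[symmetric])
      apply (simp add: Q_def G_def U_def algebra_simps)
      done
  qed
  have Oc: "Ob (pz n c) (Suc n)" using OQ cQ by (simp add: fun_eq_iff[symmetric] cQ[abs_def])
  have c0: "c j k = 0" if "j + k \<le> n" for j k
    by (rule polyid[OF Oc[unfolded pz_def]]) (use that in auto)
  have nn: "n - Suc 0 \<noteq> Suc 0" using n by simp
  have r1: "a * cnj \<beta> = 0" using c0[of 1 "n - 1"] n nn by (simp add: c_def Fn_def Fa_def)
  have r2: "complex_of_real \<rho> = a * cnj a" using c0[of 1 1] n by (simp add: c_def Fn_def Fa_def)
  have r3: "complex_of_real \<rho> * (F j k + cnj (F k j)) = (F' j k + cnj (F' k j)) * a ^ j * cnj a ^ k"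
    if jk: "2 \<le> j" "2 \<le> k" "j + k \<le> n" for j k
  proof -
    have "c j k = 0" using c0 jk by simp
    then have "complex_of_real \<rho> * (F j k * 2) + complex_of_real \<rho> * (2 * cnj (F k j)) =
      F' j k * (2 * (a ^ j * cnj a ^ k)) + 2 * (a ^ j * (cnj (F' k j) * cnj a ^ k))"
      using jk n by (simp add: c_def Fn_def Fa_def add.commute algebra_simps)
    then have "2 * (complex_of_real \<rho> * (F j k + cnj (F k j))) = 2 * ((F' j k + cnj (F' k j)) * a ^ j * cnj a ^ k)"
      by (simp add: algebra_simps)
    then show ?thesis by simp
  qed
  show ?thesis using r1 r2 r3 unfolding a_def \<beta>_def by blast
qed




lemma powr_sqrt_aux:
  fixes \<rho> :: real assumes "\<rho> > 0" "j + k \<ge> 2"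
  shows "\<rho> * \<rho> powr ((real j + real k - 2) / 2) = sqrt \<rho> ^ (j + k)"
proof -
  have e: "real j + real k - 2 = real (j + k - 2)" using assms(2) by simp
  have "sqrt \<rho> ^ (j + k - 2) = (\<rho> powr (1/2)) powr real (j + k - 2)"
    using assms(1) by (simp add: powr_half_sqrt powr_realpow)
  also have "\<dots> = \<rho> powr ((real j + real k - 2) / 2)"
    unfolding e by (simp add: powr_powr)
  finally have 1: "sqrt \<rho> ^ (j + k - 2) = \<rho> powr ((real j + real k - 2) / 2)" .
  have "sqrt \<rho> ^ (j + k) = sqrt \<rho> ^ 2 * sqrt \<rho> ^ (j + k - 2)"
  proof -
    have "j + k = Suc (Suc (j + k - 2))" using assms(2) by simp
    then have "sqrt \<rho> ^ (j + k) = sqrt \<rho> ^ Suc (Suc (j + k - 2))" by metis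
    then show ?thesis by (simp add: power2_eq_square del: real_sqrt_pow2 real_sqrt_mult_self)
  qed
  also have "sqrt \<rho> ^ 2 = \<rho>" using assms(1) by simp
  finally show ?thesis using 1 by simp
qed

lemma exp_cis_aux: "exp (\<i> * complex_of_real (\<phi> * (real j - real k))) = cis \<phi> ^ j * cnj (cis \<phi>) ^ k"
proof -
  have "cis \<phi> ^ j * cnj (cis \<phi>) ^ k = cis (real j * \<phi>) * cis (real k * (- \<phi>))"
    using Complex.DeMoivre[of \<phi> j] Complex.DeMoivre[of "-\<phi>" k] by (simp only: cis_cnj)
  also have "\<dots> = cis (\<phi> * (real j - real k))" by (simp add: cis_mult algebra_simps)
  finally show ?thesis by (simp add: cis_conv_exp)
qed

lemma backward:
  assumes "\<rho> > 0" and rel: "\<forall>j\<ge>2. \<forall>k\<ge>2.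
        F j k = complex_of_real (\<rho> powr ((real j + real k - 2) / 2))
                * exp (\<i> * complex_of_real (\<phi> * (real j - real k))) * F' j k"
  shows "rigid_equivalent F F'"
proof -
  define c0 where "c0 = complex_of_real (sqrt \<rho>) * cis \<phi>"
  have c00: "c0 \<noteq> 0" using assms(1) by (simp add: c0_def)
  have key: "graph_fun F' (c0 * z) = \<rho> * graph_fun F z" for z
  proof -
    have n: "(cmod (c0 * z))\<^sup>2 = \<rho> * (cmod z)\<^sup>2"
      using assms(1) by (simp add: c0_def norm_mult power_mult_distrib)
    have t: "F' j k * (c0 * z) ^ j * cnj (c0 * z) ^ k = complex_of_real \<rho> * (F j k * z ^ j * cnj z ^ k)"
      if "(j, k) \<in> {2..} \<times> {2..}" for j k
    proof -
      have jk: "j \<ge> 2" "k \<ge> 2" using that by auto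
      have s: "complex_of_real \<rho> * complex_of_real (\<rho> powr ((real j + real k - 2) / 2)) = complex_of_real (sqrt \<rho>) ^ (j + k)"
        using powr_sqrt_aux[OF assms(1), of j k] jk by (simp flip: of_real_mult of_real_power)
      have "complex_of_real \<rho> * F j k = complex_of_real \<rho> * complex_of_real (\<rho> powr ((real j + real k - 2) / 2))
                * exp (\<i> * complex_of_real (\<phi> * (real j - real k))) * F' j k"
        using rel jk by (simp add: mult.assoc)
      also have "\<dots> = complex_of_real (sqrt \<rho>) ^ (j + k) * (cis \<phi> ^ j * cnj (cis \<phi>) ^ k) * F' j k"
        unfolding s exp_cis_aux ..
      finally have "complex_of_real \<rho> * F j k = complex_of_real (sqrt \<rho>) ^ (j + k) * (cis \<phi> ^ j * cnj (cis \<phi>) ^ k) * F' j k" .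
      then show ?thesis
        by (simp add: c0_def power_mult_distrib power_add algebra_simps)
    qed
    have "(\<Sum>\<^sub>\<infinity>(j, k)\<in>{2..} \<times> {2..}. F' j k * (c0 * z) ^ j * cnj (c0 * z) ^ k)
        = (\<Sum>\<^sub>\<infinity>(j, k)\<in>{2..} \<times> {2..}. complex_of_real \<rho> * (F j k * z ^ j * cnj z ^ k))"
      by (rule infsum_cong) (use t in auto)
    also have "\<dots> = complex_of_real \<rho> * (\<Sum>\<^sub>\<infinity>(j, k)\<in>{2..} \<times> {2..}. F j k * z ^ j * cnj z ^ k)"
      by (subst infsum_cmult_right'[symmetric]) (simp add: case_prod_unfold)
    finally show ?thesis unfolding graph_fun_def n by (simp add: algebra_simps)
  qed
  show ?thesis
    unfolding rigid_equivalent_def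
  proof (intro exI conjI)
    show "(\<lambda>z. c0 * z) holomorphic_on ball 0 1" by (intro holomorphic_intros)
    show "(\<lambda>z. 0) holomorphic_on ball 0 1" by (intro holomorphic_intros)
    show "deriv (\<lambda>z. c0 * z) 0 \<noteq> 0" using c00 by (simp add: deriv_linear)
    show "\<rho> \<noteq> 0" using assms(1) by simp
    show "\<forall>z w. cmod z < 1 \<and> cmod w < 1 \<longrightarrow>
      (Re w = graph_fun F z) = (Re (complex_of_real \<rho> * w + 0) = graph_fun F' (c0 * z))"
      using assms(1) by (simp add: key)
  qed (auto)
qed




lemma forward:
  assumes admF: "admissible_coeffs F" and admF': "admissible_coeffs F'" and req: "rigid_equivalent F F'"
  shows "\<exists>\<rho>::real. \<rho> > 0 \<and> (\<exists>\<phi>::real. \<forall>j\<ge>2. \<forall>k\<ge>2.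
        F j k = complex_of_real (\<rho> powr ((real j + real k - 2) / 2))
                * exp (\<i> * complex_of_real (\<phi> * (real j - real k))) * F' j k)"
proof -
  obtain f g \<rho> r e where r: "r > 0" and hf: "f holomorphic_on ball 0 r" and hg: "g holomorphic_on ball 0 r"
    and f0: "f 0 = 0" and g0: "g 0 = 0" and df: "deriv f 0 \<noteq> 0" and \<rho>0: "\<rho> \<noteq> 0"
    and e: "e > 0" "e \<le> r"
    and iff: "\<And>z w. cmod z < e \<Longrightarrow> cmod w < e \<Longrightarrow>
             (Re w = graph_fun F z \<longleftrightarrow> Re (complex_of_real \<rho> * w + g z) = graph_fun F' (f z))"
    using req unfolding rigid_equivalent_def by blast
  have T1: "Tpol F 1 z = 0" for z unfolding Tpol_def by simp
  obtain C \<delta>0 where C: "0 \<le> C" "\<delta>0 > 0" "\<And>z. norm z < \<delta>0 \<Longrightarrow> norm (Sser F z) \<le> C * norm z ^ 2"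
    using trunc_Ob[OF admF, of 1] unfolding Ob_def T1 by (auto simp: power2_eq_square)
  define \<delta> where "\<delta> = min \<delta>0 (min 1 (e / (C + 2)))"
  have \<delta>: "\<delta> > 0" using C e by (simp add: \<delta>_def)
  have eq: "\<rho> * graph_fun F z + Re (g z) = graph_fun F' (f z)" if z: "norm z < \<delta>" for z
  proof -
    have z1: "norm z < 1" "norm z < \<delta>0" "norm z < e / (C + 2)" using z by (auto simp: \<delta>_def)
    have "e / (C + 2) \<le> e" using C e by (simp add: divide_le_eq)
    then have ze: "norm z < e" using z1 by linarith
    have "abs (graph_fun F z) \<le> norm z ^ 2 + norm (Sser F z)"
      unfolding graph_fun_def Sser_def[symmetric] using abs_Re_le_cmod[of "Sser F z"] zero_le_power2[of "cmod z"]
      by linarith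
    also have "\<dots> \<le> (1 + C) * norm z ^ 2" using C(3)[OF z1(2)] by (simp add: algebra_simps)
    also have "\<dots> \<le> (1 + C) * norm z"
      using z1(1) C(1) by (intro mult_left_mono) (auto simp: power2_eq_square intro: mult_left_le_one_le)
    also have "\<dots> < (C + 2) * (e / (C + 2))"
    proof -
      have "(1 + C) * norm z \<le> (C + 2) * norm z" by (intro mult_right_mono) auto
      also have "\<dots> < (C + 2) * (e / (C + 2))" using z1(3) C(1) by (intro mult_strict_left_mono) auto
      finally show ?thesis .
    qed
    also have "\<dots> = e" using C(1) by simp
    finally have "cmod (complex_of_real (graph_fun F z)) < e" by simp
    from iff[OF ze this] show ?thesis by simp
  qed
  let ?a = "deriv f 0"
  have van: "tc f m = 0" if "2 \<le> m" for m
    using that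
  proof (induction m rule: less_induct)
    case (less m)
    have n3: "3 \<le> Suc m" using less.prems by simp
    have vm: "\<And>m'. 2 \<le> m' \<Longrightarrow> m' < Suc m - 1 \<Longrightarrow> tc f m' = 0" using less.IH by simp
    have "?a * cnj (tc f (Suc m - 1)) = 0"
      using main_step[OF admF admF' hf hg r f0 g0 \<delta> eq n3 vm] by (rule conjunct1)
    then show ?case using df by simp
  qed
  have rho: "complex_of_real \<rho> = ?a * cnj ?a"
  proof -
    have n3: "3 \<le> (3::nat)" by simp
    have vm: "\<And>m'. 2 \<le> m' \<Longrightarrow> m' < 3 - 1 \<Longrightarrow> tc f m' = 0" using van by simp
    show ?thesis using main_step[OF admF admF' hf hg r f0 g0 \<delta> eq n3 vm] by blast
  qed
  have rel: "complex_of_real \<rho> * (F j k + cnj (F k j)) = (F' j k + cnj (F' k j)) * ?a ^ j * cnj ?a ^ k"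
    if "2 \<le> j" "2 \<le> k" for j k
  proof -
    have n3: "3 \<le> j + k" using that by simp
    have vm: "\<And>m'. 2 \<le> m' \<Longrightarrow> m' < j + k - 1 \<Longrightarrow> tc f m' = 0" using van by simp
    have "\<forall>j' k'. 2 \<le> j' \<longrightarrow> 2 \<le> k' \<longrightarrow> j' + k' \<le> j + k \<longrightarrow>
       complex_of_real \<rho> * (F j' k' + cnj (F k' j')) = (F' j' k' + cnj (F' k' j')) * ?a ^ j' * cnj ?a ^ k'"
      using main_step[OF admF admF' hf hg r f0 g0 \<delta> eq n3 vm] by blast
    then show ?thesis using that by blast
  qed
  have rhoa: "\<rho> = cmod ?a ^ 2"
  proof -
    have "complex_of_real \<rho> = complex_of_real (cmod ?a ^ 2)" unfolding complex_norm_square by (rule rho)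
    then show ?thesis using of_real_eq_iff by blast
  qed
  have rpos: "\<rho> > 0" using rhoa df by simp
  have sq: "sqrt \<rho> = cmod ?a" using rhoa by simp
  define \<phi> where "\<phi> = Arg ?a"
  have adec: "?a = complex_of_real (cmod ?a) * cis \<phi>"
    using rcis_cmod_Arg[of ?a] by (simp add: rcis_def \<phi>_def)
  show ?thesis
  proof (intro exI conjI allI impI)
    show "\<rho> > 0" by (rule rpos)
    fix j k :: nat assume jk: "2 \<le> j" "2 \<le> k"
    have "F k j = cnj (F j k)" using admF jk unfolding admissible_coeffs_def by blast
    then have sF: "cnj (F k j) = F j k" by simp
    have "F' k j = cnj (F' j k)" using admF' jk unfolding admissible_coeffs_def by blast
    then have sF': "cnj (F' k j) = F' j k" by simp
    have "complex_of_real \<rho> * (2 * F j k) = 2 * (F' j k * ?a ^ j * cnj ?a ^ k)"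
      using rel[OF jk] unfolding sF sF' by (simp add: algebra_simps)
    then have r1: "complex_of_real \<rho> * F j k = F' j k * ?a ^ j * cnj ?a ^ k" by simp
    have "?a ^ j * cnj ?a ^ k = complex_of_real (cmod ?a) ^ (j + k) * (cis \<phi> ^ j * cnj (cis \<phi>) ^ k)"
      by (subst (1 2) adec) (simp add: power_mult_distrib power_add)
    also have "\<dots> = complex_of_real (\<rho> * \<rho> powr ((real j + real k - 2) / 2)) * exp (\<i> * complex_of_real (\<phi> * (real j - real k)))"
    proof -
      have pw: "\<rho> * \<rho> powr ((real j + real k - 2) / 2) = sqrt \<rho> ^ (j + k)"
        using powr_sqrt_aux[OF rpos, of j k] jk by simp
      show ?thesis unfolding exp_cis_aux pw sq by simp
    qed
    finally have "complex_of_real \<rho> * F j k = complex_of_real \<rho> * (complex_of_real (\<rho> powr ((real j + real k - 2) / 2))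
                * exp (\<i> * complex_of_real (\<phi> * (real j - real k))) * F' j k)"
      using r1 by (simp add: algebra_simps)
    then show "F j k = complex_of_real (\<rho> powr ((real j + real k - 2) / 2))
                * exp (\<i> * complex_of_real (\<phi> * (real j - real k))) * F' j k"
      using rpos by simp
  qed
qed

theorem corollary2p13:
  fixes F F' :: "nat \<Rightarrow> nat \<Rightarrow> complex"
  assumes "admissible_coeffs F" and "admissible_coeffs F'"
  shows "rigid_equivalent F F' \<longleftrightarrow>
    (\<exists>\<rho>::real. \<rho> > 0 \<and> (\<exists>\<phi>::real. \<forall>j\<ge>2. \<forall>k\<ge>2.
        F j k = complex_of_real (\<rho> powr ((real j + real k - 2) / 2))
                * exp (\<i> * complex_of_real (\<phi> * (real j - real k))) * F' j k))"
  using forward[OF assms] backward by blast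


end
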